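(* Let $p$ be a natural number and $\mathcal{M}=M_2(\mathbb{C})\oplus_\infty\cdots\oplus_\infty M_2(\mathbb{C})$ ($p$ times). Let $\mathbf{x}=(x_1,\dots,x_p)\in\mathcal{M}$ with $x_i=\begin{bmatrix} x^{(i)}_{11} & x^{(i)}_{12}\\ x^{(i)}_{21} & x^{(i)}_{22}\end{bmatrix}$, and let $\mathcal{V}=D_2(\mathbb{C})\oplus\cdots\oplus D_2(\mathbb{C})$ ($p$ times), where $D_2(\mathbb{C})$ is the subspace of diagonal matrices in $M_2(\mathbb{C})$. Then \[ dist(\mathbf{x},\mathcal{V}) = \max\{|x_{12}^{(i)}|,|x_{21}^{(i)}|:~1\leq i \leq p\} \quad \text{and} \quad dist_1(\mathbf{x},\mathcal{V})=\sum_{i=1}^p \big(|x^{(i)}_{21}|+|x^{(i)}_{12}|\big). \]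
   Context: $\mathcal{M}$ carries the $C^*$-norm $\|(z_1,\dots,z_p)\|=\max_i\|z_i\|$ (operator norms), and $dist$ is the distance in this norm. $dist_1$ is the distance with respect to the norm $\|(z_1,\dots,z_p)\|_1=\sum_i Tr(|z_i|)$ (sum of trace norms). *)

theory Defs
  imports "HOL-Analysis.Analysis"
begin

type_synonym cmat2 = "complex ^ 2 ^ 2"

definition opnorm2 :: "cmat2 \<Rightarrow> real" where
  "opnorm2 z = onorm (\<lambda>v::complex^2. z *v v)"

definition adj2 :: "cmat2 \<Rightarrow> cmat2" where
  "adj2 z = (\<chi> i j. cnj (z $ j $ i))"

definition trace2 :: "cmat2 \<Rightarrow> complex" where
  "trace2 z = (\<Sum>i\<in>UNIV. z $ i $ i)"

definition psd2 :: "cmat2 \<Rightarrow> bool" where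
  "psd2 P \<longleftrightarrow> adj2 P = P \<and>
     (\<forall>v::complex^2. Im (\<Sum>i\<in>UNIV. cnj (v $ i) * (P *v v) $ i) = 0
                      \<and> Re (\<Sum>i\<in>UNIV. cnj (v $ i) * (P *v v) $ i) \<ge> 0)"

definition absm2 :: "cmat2 \<Rightarrow> cmat2" where
  "absm2 z = (THE P. psd2 P \<and> P ** P = adj2 z ** z)"

definition tracenorm2 :: "cmat2 \<Rightarrow> real" where
  "tracenorm2 z = Re (trace2 (absm2 z))"

text \<open>Elements of M = M_2(C) (+) ... (+) M_2(C), p summands, are functions on {..<p}.\<close>
definition Mset :: "nat \<Rightarrow> (nat \<Rightarrow> cmat2) set" where
  "Mset p = {x. \<forall>i\<ge>p. x i = 0}"

definition diag2 :: "cmat2 set" where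
  "diag2 = {d. \<forall>i j. i \<noteq> j \<longrightarrow> d $ i $ j = 0}"

definition Vset :: "nat \<Rightarrow> (nat \<Rightarrow> cmat2) set" where
  "Vset p = {v \<in> Mset p. \<forall>i<p. v i \<in> diag2}"

definition Mnorm :: "nat \<Rightarrow> (nat \<Rightarrow> cmat2) \<Rightarrow> real" where
  "Mnorm p x = Max ((\<lambda>i. opnorm2 (x i)) ` {..<p})"

definition Mnorm1 :: "nat \<Rightarrow> (nat \<Rightarrow> cmat2) \<Rightarrow> real" where
  "Mnorm1 p x = (\<Sum>i<p. tracenorm2 (x i))"

definition distM :: "nat \<Rightarrow> (nat \<Rightarrow> cmat2) \<Rightarrow> (nat \<Rightarrow> cmat2) set \<Rightarrow> real" where
  "distM p x S = Inf ((\<lambda>v. Mnorm p (x - v)) ` S)"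

definition distM1 :: "nat \<Rightarrow> (nat \<Rightarrow> cmat2) \<Rightarrow> (nat \<Rightarrow> cmat2) set \<Rightarrow> real" where
  "distM1 p x S = Inf ((\<lambda>v. Mnorm1 p (x - v)) ` S)"

end

theory Submission
  imports Defs
begin


lemma quad2: fixes v :: "complex^2" and P :: cmat2 shows "(\<Sum>i\<in>UNIV. cnj (v $ i) * (P *v v) $ i) =
  cnj (v $ 1) * (P $ 1 $ 1 * v $ 1 + P $ 1 $ 2 * v $ 2) + cnj (v $ 2) * (P $ 2 $ 1* v $ 1 + P $ 2 $ 2* v $ 2)"
  by (simp add: sum_2 matrix_vector_mult_def)

lemma cmod_sq: "complex_of_real (cmod z ^ 2) = z * cnj z"
  using complex_norm_square[of z] by simp

lemma psd2_entries:
  assumes "psd2 P"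
  shows "P $ 1 $ 1 = of_real (Re (P $ 1 $ 1))" "Re (P $ 1 $ 1) \<ge> 0"
        "P $ 2 $ 2 = of_real (Re (P $ 2 $ 2))" "Re (P $ 2 $ 2) \<ge> 0"
        "P $ 2 $ 1 = cnj (P $ 1 $ 2)"
        "Re (P $ 1 $ 1) * Re (P $ 2 $ 2) \<ge> cmod (P $ 1 $ 2) ^ 2"
proof -
  have herm: "adj2 P = P" and Q: "\<And>v. Im (\<Sum>i\<in>UNIV. cnj (v $ i) * (P *v v) $ i) = 0
                      \<and> Re (\<Sum>i\<in>UNIV. cnj (v $ i) * (P *v v) $ i) \<ge> 0"
    using assms unfolding psd2_def by auto
  have h: "cnj (P $ j $ i) = P $ i $ j" for i j
    proof - have "adj2 P $ i $ j = P $ i $ j" using herm by simp thus ?thesis by (simp add: adj2_def) qed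
  show "P $ 1 $ 1 = of_real (Re (P $ 1 $ 1))" using h[of 1 1] by (simp add: complex_eq_iff)
  show "P $ 2 $ 2 = of_real (Re (P $ 2 $ 2))" using h[of 2 2] by (simp add: complex_eq_iff)
  show "P $ 2 $ 1 = cnj (P $ 1 $ 2)" using h[of 1 2] by simp
  show "Re (P $ 1 $ 1) \<ge> 0" using Q[of "vector [1,0]"] by (simp add: quad2)
  show "Re (P $ 2 $ 2) \<ge> 0" using Q[of "vector [0,1]"] by (simp add: quad2)
  have e11: "P $ 1 $ 1 = of_real (Re (P $ 1 $ 1))" using h[of 1 1] by (simp add: complex_eq_iff)
  have e22: "P $ 2 $ 2 = of_real (Re (P $ 2 $ 2))" using h[of 2 2] by (simp add: complex_eq_iff)
  have e21: "P $ 2 $ 1 = cnj (P $ 1 $ 2)" using h[of 1 2] by simp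
  define a where "a = Re (P $ 1 $ 1)"
  define b where "b = Re (P $ 2 $ 2)"
  define g where "g = P $ 1 $ 2"
  have QQ: "Re (cnj u * (of_real a * u + g * w) + cnj w * (cnj g * u + of_real b * w)) \<ge> 0" for u w
    using Q[of "vector [u, w]"] e11 e22 e21 unfolding quad2 a_def b_def g_def by simp
  have a0: "a \<ge> 0" using Q[of "vector [1,0]"] unfolding a_def by (simp add: quad2)
  show "Re (P $ 1 $ 1) * Re (P $ 2 $ 2) \<ge> cmod (P $ 1 $ 2) ^ 2"
  proof (cases "a = 0")
    case False
    have "Re (cnj g * (of_real a * g + g * (- of_real a)) + cnj (- of_real a) * (cnj g * g + of_real b * (- of_real a))) = a * (a * b - cmod g ^ 2)"
      unfolding cmod_power2 by (simp add: algebra_simps power2_eq_square)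
    hence "a * (a * b - cmod g ^ 2) \<ge> 0" using QQ[of g "- of_real a"] by simp
    hence "a * b - cmod g ^ 2 \<ge> 0" using False a0
      by (simp add: zero_le_mult_iff)
    thus ?thesis unfolding a_def b_def g_def by simp
  next
    case True
    have "g = 0"
    proof (rule ccontr)
      assume gn: "g \<noteq> 0"
      define r where "r = (b + 1) / (2 * cmod g ^ 2)"
      have "Re (cnj (- of_real r * g) * (of_real a * (- of_real r * g) + g * 1) + cnj 1 * (cnj g * (- of_real r * g) + of_real b * 1)) = b - 2 * r * cmod g ^ 2"
        using True unfolding cmod_power2 by (simp add: algebra_simps power2_eq_square)
      also have "\<dots> = -1" using gn unfolding r_def by (simp add: field_simps)
      finally show False using QQ[of "- of_real r * g" 1] by simp
    qed
    thus ?thesis using True unfolding a_def b_def g_def by simp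
  qed
qed

lemma real_quad_nonneg:
  fixes a b c x y :: real
  assumes "a \<ge> 0" "b \<ge> 0" "c\<^sup>2 \<le> a * b" "c \<ge> 0" "x \<ge> 0" "y \<ge> 0"
  shows "a * x\<^sup>2 + b * y\<^sup>2 - 2 * c * x * y \<ge> 0"
proof (cases "a = 0")
  case True
  then have "c\<^sup>2 \<le> 0" using assms by simp
  then have "c = 0" by (simp add: power2_less_eq_zero_iff)
  then show ?thesis using assms True by simp
next
  case False
  have "a * (a * x\<^sup>2 + b * y\<^sup>2 - 2 * c * x * y) = (a * x - c * y)\<^sup>2 + (a * b - c\<^sup>2) * y\<^sup>2"
    by (simp add: algebra_simps power2_eq_square)
  also have "\<dots> \<ge> 0" using assms by (intro add_nonneg_nonneg mult_nonneg_nonneg) auto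
  finally have "0 \<le> a * (a * x\<^sup>2 + b * y\<^sup>2 - 2 * c * x * y)" .
  then show ?thesis using False assms(1) by (simp add: zero_le_mult_iff)
qed

lemma psd2_of_entries:
  fixes P :: cmat2
  assumes "P $ 1 $ 1 = of_real a" "P $ 2 $ 2 = of_real b" "P $ 2 $ 1 = cnj (P $ 1 $ 2)"
    "a \<ge> 0" "b \<ge> 0" "cmod (P $ 1 $ 2) ^ 2 \<le> a * b"
  shows "psd2 P"
proof -
  define g where "g = P $ 1 $ 2"
  have "adj2 P = P"
    unfolding adj2_def using assms by (simp add: vec_eq_iff forall_2)
  moreover have "Im (\<Sum>i\<in>UNIV. cnj (v $ i) * (P *v v) $ i) = 0
                      \<and> Re (\<Sum>i\<in>UNIV. cnj (v $ i) * (P *v v) $ i) \<ge> 0" for v :: "complex^2"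
  proof -
    define u where "u = v $ 1"
    define w where "w = v $ 2"
    have q: "(\<Sum>i\<in>UNIV. cnj (v $ i) * (P *v v) $ i) = cnj u * (of_real a * u + g * w) + cnj w * (cnj g * u + of_real b * w)"
      unfolding quad2 u_def w_def g_def using assms by simp
    have im: "Im (cnj u * (of_real a * u + g * w) + cnj w * (cnj g * u + of_real b * w)) = 0"
      by (simp add: algebra_simps)
    have re: "Re (cnj u * (of_real a * u + g * w) + cnj w * (cnj g * u + of_real b * w)) =
       a * (cmod u)\<^sup>2 + b * (cmod w)\<^sup>2 + 2 * Re (cnj u * g * w)"
      unfolding cmod_power2 by (simp add: algebra_simps power2_eq_square)
    have "\<bar>Re (cnj u * g * w)\<bar> \<le> cmod g * cmod u * cmod w"
      proof -
      have "\<bar>Re (cnj u * g * w)\<bar> \<le> cmod (cnj u * g * w)" by (rule abs_Re_le_cmod)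
      also have "\<dots> = cmod g * cmod u * cmod w" by (simp add: norm_mult)
      finally show ?thesis .
    qed
    moreover have "a * (cmod u)\<^sup>2 + b * (cmod w)\<^sup>2 - 2 * cmod g * cmod u * cmod w \<ge> 0"
      by (rule real_quad_nonneg) (use assms in \<open>auto simp: g_def\<close>)
    ultimately have re0: "Re (cnj u * (of_real a * u + g * w) + cnj w * (cnj g * u + of_real b * w)) \<ge> 0"
      unfolding re by linarith
    show ?thesis unfolding q using im re0 by blast
  qed
  ultimately show ?thesis unfolding psd2_def by blast
qed


definition sq0 :: "cmat2 \<Rightarrow> real \<Rightarrow> cmat2" where
  "sq0 H d = (\<chi> i j. (H $ i $ j + (if i = j then of_real d else 0)) / of_real (sqrt (Re (H $ 1 $ 1) + Re (H $ 2 $ 2) + 2 * d)))"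

lemma mult2: fixes P Q :: cmat2 shows
  "(P ** Q) $ i $ j = P $ i $ 1 * Q $ 1 $ j + P $ i $ 2 * Q $ 2 $ j"
  by (simp add: matrix_matrix_mult_def sum_2)

lemma sq_unique:
  fixes H P :: cmat2
  assumes H11: "H $ 1 $ 1 = of_real h1" and H22: "H $ 2 $ 2 = of_real h2"
    and "d \<ge> 0" and Hd: "h1 * h2 - cmod (H $ 1 $ 2) ^ 2 = d ^ 2"
    and P: "psd2 P" "P ** P = H"
  shows "P = sq0 H d"
proof -
  define a where "a = Re (P $ 1 $ 1)"
  define b where "b = Re (P $ 2 $ 2)"
  define c where "c = P $ 1 $ 2"
  define k where "k = cmod c ^ 2"
  have e11: "P $ 1 $ 1 = of_real a" and e22: "P $ 2 $ 2 = of_real b" and e21: "P $ 2 $ 1 = cnj c"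
    and a0: "a \<ge> 0" and b0: "b \<ge> 0" and det: "a * b \<ge> k"
    using psd2_entries[OF P(1)] unfolding a_def b_def c_def k_def by auto
  have ck: "c * cnj c = of_real k" "cnj c * c = of_real k"
    unfolding k_def cmod_sq by (simp_all add: mult.commute)
  have "H $ 1 $ 1 = of_real a * of_real a + c * cnj c" using P(2) e11 e21 unfolding c_def by (auto simp: mult2)
  hence "of_real h1 = (of_real (a^2 + k) :: complex)" unfolding H11 ck by (simp add: power2_eq_square)
  hence h1: "h1 = a^2 + k" using of_real_eq_iff by blast
  have "H $ 2 $ 2 = cnj c * c + of_real b * of_real b" using P(2) e22 e21 unfolding c_def by (auto simp: mult2)
  hence "of_real h2 = (of_real (b^2 + k) :: complex)" unfolding H22 ck by (simp add: power2_eq_square)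
  hence h2: "h2 = b^2 + k" using of_real_eq_iff by blast
  have g: "H $ 1 $ 2 = c * of_real (a + b)" using P(2) e11 e22 unfolding c_def by (auto simp: mult2 algebra_simps)
  have g21: "H $ 2 $ 1 = cnj c * of_real (a + b)" using P(2) e11 e22 e21 unfolding c_def by (auto simp: mult2 algebra_simps)
  have gk: "cmod (H $ 1 $ 2) ^ 2 = k * (a + b)^2"
    unfolding g k_def norm_mult norm_of_real by (simp add: power_mult_distrib)
  have "d ^ 2 = (a * b - k) ^ 2" using Hd unfolding h1 h2 gk by (simp add: algebra_simps power2_eq_square)
  hence dd: "d = a * b - k" using det \<open>d \<ge> 0\<close> by (simp add: power2_eq_iff_nonneg)
  have "(a + b) ^ 2 = h1 + h2 + 2 * d" unfolding h1 h2 dd by (simp add: algebra_simps power2_eq_square)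
  hence t: "sqrt (Re (H $ 1 $ 1) + Re (H $ 2 $ 2) + 2 * d) = a + b"
    using a0 b0 H11 H22 real_sqrt_unique[of "a+b" "h1 + h2 + 2 * d"] by simp
  show ?thesis
  proof (cases "a + b = 0")
    case True
    hence "a = 0" "b = 0" using a0 b0 by auto
    hence "k = 0" using dd \<open>d \<ge> 0\<close> k_def by simp
    hence "c = 0" unfolding k_def by simp
    thus ?thesis using True t \<open>a = 0\<close> \<open>b = 0\<close> e11 e22 e21
      unfolding sq0_def c_def by (simp add: vec_eq_iff forall_2)
  next
    case False
    hence ne: "complex_of_real (a + b) \<noteq> 0" by (simp only: of_real_eq_0_iff) simp
    have "h1 + d = a * (a + b)" unfolding h1 dd by (simp add: algebra_simps power2_eq_square)
    hence x1: "P $ 1 $ 1 = (H $ 1 $ 1 + of_real d) / of_real (a + b)"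
      using False unfolding e11 H11 by (simp add: field_simps flip: of_real_add of_real_mult)
    have "h2 + d = b * (a + b)" unfolding h2 dd by (simp add: algebra_simps power2_eq_square)
    hence x2: "P $ 2 $ 2 = (H $ 2 $ 2 + of_real d) / of_real (a + b)"
      using False unfolding e22 H22 by (simp add: field_simps flip: of_real_add of_real_mult)
    have x3: "P $ 1 $ 2 = H $ 1 $ 2 / of_real (a + b)" using ne unfolding g c_def by simp
    have x4: "P $ 2 $ 1 = H $ 2 $ 1 / of_real (a + b)" using ne unfolding g21 e21 by simp
    show ?thesis unfolding sq0_def t using x1 x2 x3 x4 by (simp add: vec_eq_iff forall_2)
  qed
qed

lemma sq_exists:
  fixes H :: cmat2
  assumes H11: "H $ 1 $ 1 = of_real h1" and H22: "H $ 2 $ 2 = of_real h2"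
    and H21: "H $ 2 $ 1 = cnj (H $ 1 $ 2)"
    and h10: "h1 \<ge> 0" and h20: "h2 \<ge> 0"
    and d0: "d \<ge> 0" and Hd: "h1 * h2 - cmod (H $ 1 $ 2) ^ 2 = d ^ 2"
  shows "psd2 (sq0 H d) \<and> sq0 H d ** sq0 H d = H"
proof -
  define t where "t = sqrt (h1 + h2 + 2 * d)"
  define g where "g = H $ 1 $ 2"
  have t: "sqrt (Re (H $ 1 $ 1) + Re (H $ 2 $ 2) + 2 * d) = t" unfolding t_def H11 H22 by simp
  have tt: "t ^ 2 = h1 + h2 + 2 * d" unfolding t_def using h10 h20 d0 by (simp add: add_nonneg_nonneg)
  have t0: "t \<ge> 0" unfolding t_def using h10 h20 d0 by simp
  have gg: "g * cnj g = of_real (h1 * h2 - d ^ 2)" "cnj g * g = of_real (h1 * h2 - d ^ 2)"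
  proof -
    have gm: "cmod g ^ 2 = h1 * h2 - d ^ 2" using Hd g_def by simp
    show "g * cnj g = of_real (h1 * h2 - d ^ 2)" unfolding gm[symmetric] cmod_sq by simp
    show "cnj g * g = of_real (h1 * h2 - d ^ 2)" unfolding gm[symmetric] cmod_sq by simp
  qed
  show ?thesis
  proof (cases "t = 0")
    case True
    hence "h1 + h2 + 2 * d = 0" using tt by simp
    hence z: "h1 = 0" "h2 = 0" "d = 0" using h10 h20 d0 by auto
    hence "cmod g ^ 2 = 0" using Hd g_def by simp
    hence "g = 0" by simp
    hence H0: "H = 0" using z H11 H22 H21 unfolding g_def by (simp add: vec_eq_iff forall_2)
    have S0: "sq0 H d = 0" unfolding sq0_def t True by (simp add: vec_eq_iff)
    have "psd2 (0::cmat2)" by (rule psd2_of_entries[of _ 0 0]) auto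
    thus ?thesis using S0 H0 by simp
  next
    case False
    hence tp: "t > 0" using t0 by simp
    have s11: "sq0 H d $ 1 $ 1 = of_real ((h1 + d) / t)" unfolding sq0_def t by (simp add: H11)
    have s22: "sq0 H d $ 2 $ 2 = of_real ((h2 + d) / t)" unfolding sq0_def t by (simp add: H22)
    have s12: "sq0 H d $ 1 $ 2 = g / of_real t" unfolding sq0_def t by (simp add: g_def)
    have s21: "sq0 H d $ 2 $ 1 = cnj g / of_real t" unfolding sq0_def t by (simp add: g_def H21)
    have psd: "psd2 (sq0 H d)"
    proof (rule psd2_of_entries[OF s11 s22])
      show "sq0 H d $ 2 $ 1 = cnj (sq0 H d $ 1 $ 2)" unfolding s12 s21 by simp
      show "0 \<le> (h1 + d) / t" "0 \<le> (h2 + d) / t" using tp h10 h20 d0 by auto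
      have "cmod g ^ 2 \<le> (h1 + d) * (h2 + d)" using Hd h10 h20 d0 unfolding g_def
        by (simp add: algebra_simps)
      hence "cmod g ^ 2 / t ^ 2 \<le> (h1 + d) * (h2 + d) / t ^ 2"
        using tp by (simp add: divide_right_mono)
      thus "cmod (sq0 H d $ 1 $ 2) ^ 2 \<le> (h1 + d) / t * ((h2 + d) / t)"
        unfolding s12 by (simp add: norm_divide power_divide power2_eq_square)
    qed
    have tc: "(of_real t :: complex) ^ 2 = of_real (h1 + h2 + 2 * d)"
      using tt by (metis of_real_power)
    have tn: "(of_real t :: complex) \<noteq> 0" using tp by simp
    have tX: "(of_real (h1 + h2 + 2 * d) :: complex) \<noteq> 0"
      using tp tt by (metis of_real_eq_0_iff power_not_zero less_irrefl)
    have "sq0 H d ** sq0 H d = H"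
    proof -
      have "sq0 H d $ 1 $ 1 * sq0 H d $ 1 $ 1 + sq0 H d $ 1 $ 2 * sq0 H d $ 2 $ 1 = H $ 1 $ 1"
      proof -
        have "sq0 H d $ 1 $ 1 * sq0 H d $ 1 $ 1 + sq0 H d $ 1 $ 2 * sq0 H d $ 2 $ 1
             = (of_real ((h1 + d)^2 + (h1 * h2 - d^2))) / (of_real t)^2"
          unfolding s11 s12 s21 using tn gg by (simp add: field_simps power2_eq_square)
        also have "\<dots> = of_real (((h1 + d)^2 + (h1 * h2 - d^2)) / (h1 + h2 + 2 * d))"
          unfolding tc by (simp only: of_real_divide)
        also have "\<dots> = of_real h1"
        proof -
          have pos: "h1 + h2 + 2 * d > 0" using tp tt by (metis zero_less_power)
          have "(h1 + d)^2 + (h1 * h2 - d^2) = h1 * (h1 + h2 + 2 * d)" by (simp add: algebra_simps power2_eq_square)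
          thus ?thesis using pos by simp
        qed
        finally show ?thesis using H11 by simp
      qed
      moreover have "sq0 H d $ 2 $ 1 * sq0 H d $ 1 $ 2 + sq0 H d $ 2 $ 2 * sq0 H d $ 2 $ 2 = H $ 2 $ 2"
      proof -
        have "sq0 H d $ 2 $ 1 * sq0 H d $ 1 $ 2 + sq0 H d $ 2 $ 2 * sq0 H d $ 2 $ 2
             = (of_real ((h2 + d)^2 + (h1 * h2 - d^2))) / (of_real t)^2"
          unfolding s22 s12 s21 using tn gg by (simp add: field_simps power2_eq_square)
        also have "\<dots> = of_real (((h2 + d)^2 + (h1 * h2 - d^2)) / (h1 + h2 + 2 * d))"
          unfolding tc by (simp only: of_real_divide)
        also have "\<dots> = of_real h2"
        proof -
          have pos: "h1 + h2 + 2 * d > 0" using tp tt by (metis zero_less_power)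
          have "(h2 + d)^2 + (h1 * h2 - d^2) = h2 * (h1 + h2 + 2 * d)" by (simp add: algebra_simps power2_eq_square)
          thus ?thesis using pos by simp
        qed
        finally show ?thesis using H22 by simp
      qed
      moreover have "sq0 H d $ 1 $ 1 * sq0 H d $ 1 $ 2 + sq0 H d $ 1 $ 2 * sq0 H d $ 2 $ 2 = H $ 1 $ 2"
      proof -
        have "sq0 H d $ 1 $ 1 * sq0 H d $ 1 $ 2 + sq0 H d $ 1 $ 2 * sq0 H d $ 2 $ 2
             = g * of_real (h1 + h2 + 2 * d) / (of_real t)^2"
          unfolding s11 s22 s12 using tn by (simp add: field_simps power2_eq_square)
        also have "\<dots> = g" unfolding tc using tX by (rule nonzero_mult_div_cancel_right)
        finally show ?thesis using g_def by simp
      qed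
      moreover have "sq0 H d $ 2 $ 1 * sq0 H d $ 1 $ 1 + sq0 H d $ 2 $ 2 * sq0 H d $ 2 $ 1 = H $ 2 $ 1"
      proof -
        have "sq0 H d $ 2 $ 1 * sq0 H d $ 1 $ 1 + sq0 H d $ 2 $ 2 * sq0 H d $ 2 $ 1
             = cnj g * of_real (h1 + h2 + 2 * d) / (of_real t)^2"
          unfolding s11 s22 s21 using tn by (simp add: field_simps power2_eq_square)
        also have "\<dots> = cnj g" unfolding tc using tX by (rule nonzero_mult_div_cancel_right)
        finally show ?thesis using g_def H21 by simp
      qed
      ultimately show ?thesis by (simp add: vec_eq_iff forall_2 mult2)
    qed
    with psd show ?thesis by simp
  qed
qed



lemma tracenorm2_formula:
  fixes A :: cmat2
  shows "tracenorm2 A = sqrt (cmod (A $ 1 $ 1) ^ 2 + cmod (A $ 2 $ 1) ^ 2 + cmod (A $ 1 $ 2) ^ 2 + cmod (A $ 2 $ 2) ^ 2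
            + 2 * cmod (A $ 1 $ 1 * A $ 2 $ 2 - A $ 1 $ 2 * A $ 2 $ 1))"
proof -
  define H where "H = adj2 A ** A"
  define h1 where "h1 = cmod (A $ 1 $ 1) ^ 2 + cmod (A $ 2 $ 1) ^ 2"
  define h2 where "h2 = cmod (A $ 1 $ 2) ^ 2 + cmod (A $ 2 $ 2) ^ 2"
  define d where "d = cmod (A $ 1 $ 1 * A $ 2 $ 2 - A $ 1 $ 2 * A $ 2 $ 1)"
  have H11: "H $ 1 $ 1 = of_real h1" unfolding H_def h1_def mult2 adj2_def
    by (simp only: vec_lambda_beta of_real_add cmod_sq mult.commute)
  have H22: "H $ 2 $ 2 = of_real h2" unfolding H_def h2_def mult2 adj2_def
    by (simp only: vec_lambda_beta of_real_add cmod_sq mult.commute)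
  have H21: "H $ 2 $ 1 = cnj (H $ 1 $ 2)" unfolding H_def mult2 adj2_def
    by (simp add: mult.commute)
  have "complex_of_real (h1 * h2 - cmod (H $ 1 $ 2) ^ 2) = complex_of_real (d ^ 2)"
    unfolding H_def mult2 adj2_def h1_def h2_def d_def
    by (simp only: vec_lambda_beta of_real_add of_real_mult of_real_diff cmod_sq complex_cnj_mult
         complex_cnj_add complex_cnj_diff complex_cnj_cnj) algebra
  hence Hd: "h1 * h2 - cmod (H $ 1 $ 2) ^ 2 = d ^ 2" using of_real_eq_iff by blast
  have h10: "h1 \<ge> 0" and h20: "h2 \<ge> 0" and d0: "d \<ge> 0" unfolding h1_def h2_def d_def by auto
  have ex: "psd2 (sq0 H d) \<and> sq0 H d ** sq0 H d = H"
    by (rule sq_exists[OF H11 H22 H21 h10 h20 d0 Hd])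
  have "absm2 A = sq0 H d" unfolding absm2_def H_def[symmetric]
  proof (rule the_equality)
    show "psd2 (sq0 H d) \<and> sq0 H d ** sq0 H d = H" by (rule ex)
    show "\<And>P. psd2 P \<and> P ** P = H \<Longrightarrow> P = sq0 H d"
      using sq_unique[OF H11 H22 d0 Hd] by blast
  qed
  define t where "t = sqrt (h1 + h2 + 2 * d)"
  have tt: "t ^ 2 = h1 + h2 + 2 * d" unfolding t_def using h10 h20 d0 by (simp add: add_nonneg_nonneg)
  have "tracenorm2 A = Re (sq0 H d $ 1 $ 1 + sq0 H d $ 2 $ 2)"
    unfolding tracenorm2_def trace2_def sum_2 \<open>absm2 A = sq0 H d\<close> ..
  also have "\<dots> = (h1 + h2 + 2 * d) / t"
    unfolding sq0_def t_def using H11 H22 by (simp add: add_divide_distrib)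
  also have "\<dots> = t" unfolding tt[symmetric] by (simp add: power2_eq_square)
  finally show ?thesis unfolding t_def h1_def h2_def d_def by (simp add: algebra_simps)
qed



lemma norm_c2: "norm (v :: complex^2) = sqrt (cmod (v $ 1) ^ 2 + cmod (v $ 2) ^ 2)"
  by (simp add: norm_vec_def L2_set_def sum_2)

lemma opnorm2_ge:
  fixes A :: cmat2
  shows "cmod (A $ 1 $ 2) \<le> opnorm2 A" "cmod (A $ 2 $ 1) \<le> opnorm2 A"
proof -
  have b: "norm (A *v x) \<le> opnorm2 A * norm x" for x
    unfolding opnorm2_def by (rule onorm) simp
  have "cmod (A $ 1 $ 2) = cmod ((A *v axis 2 1) $ 1)"
    by (simp add: matrix_vector_mult_def sum_2 axis_def)
  also have "\<dots> \<le> norm (A *v axis 2 1)" by (rule Finite_Cartesian_Product.norm_nth_le)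
  also have "\<dots> \<le> opnorm2 A" using b[of "axis 2 1"] by (simp add: norm_c2 axis_def)
  finally show "cmod (A $ 1 $ 2) \<le> opnorm2 A" .
  have "cmod (A $ 2 $ 1) = cmod ((A *v axis 1 1) $ 2)"
    by (simp add: matrix_vector_mult_def sum_2 axis_def)
  also have "\<dots> \<le> norm (A *v axis 1 1)" by (rule Finite_Cartesian_Product.norm_nth_le)
  also have "\<dots> \<le> opnorm2 A" using b[of "axis 1 1"] by (simp add: norm_c2 axis_def)
  finally show "cmod (A $ 2 $ 1) \<le> opnorm2 A" .
qed

lemma opnorm2_off:
  fixes A :: cmat2
  assumes "A $ 1 $ 1 = 0" "A $ 2 $ 2 = 0"
  shows "opnorm2 A = max (cmod (A $ 1 $ 2)) (cmod (A $ 2 $ 1))"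
proof (rule antisym)
  define m where "m = max (cmod (A $ 1 $ 2)) (cmod (A $ 2 $ 1))"
  show "opnorm2 A \<le> max (cmod (A $ 1 $ 2)) (cmod (A $ 2 $ 1))"
    unfolding opnorm2_def m_def[symmetric]
  proof (rule onorm_le)
    fix v :: "complex^2"
    have m0: "m \<ge> 0" unfolding m_def by (meson le_max_iff_disj norm_ge_zero)
    have e1: "(A *v v) $ 1 = A $ 1 $ 2 * v $ 2" and e2: "(A *v v) $ 2 = A $ 2 $ 1 * v $ 1"
      using assms by (simp_all add: matrix_vector_mult_def sum_2)
    have "cmod (A $ 1 $ 2 * v $ 2) ^ 2 \<le> m ^ 2 * cmod (v $ 2) ^ 2"
      unfolding norm_mult power_mult_distrib m_def
      by (intro mult_right_mono power_mono) auto
    moreover have "cmod (A $ 2 $ 1 * v $ 1) ^ 2 \<le> m ^ 2 * cmod (v $ 1) ^ 2"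
      unfolding norm_mult power_mult_distrib m_def
      by (intro mult_right_mono power_mono) auto
    ultimately have "cmod ((A *v v) $ 1) ^ 2 + cmod ((A *v v) $ 2) ^ 2 \<le> (m * norm v) ^ 2"
      unfolding e1 e2 norm_c2[of v] power_mult_distrib by (simp add: algebra_simps)
    hence "sqrt (cmod ((A *v v) $ 1) ^ 2 + cmod ((A *v v) $ 2) ^ 2) \<le> m * norm v"
      using m0 by (simp add: real_sqrt_le_iff real_le_lsqrt real_sqrt_le_mono
          flip: real_sqrt_abs)
    thus "norm (A *v v) \<le> m * norm v" unfolding norm_c2[of "A *v v"] .
  qed
  show "max (cmod (A $ 1 $ 2)) (cmod (A $ 2 $ 1)) \<le> opnorm2 A"
    using opnorm2_ge by simp
qed



lemma tracenorm2_ge: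
  fixes A :: cmat2
  shows "cmod (A $ 2 $ 1) + cmod (A $ 1 $ 2) \<le> tracenorm2 A"
proof -
  define a where "a = cmod (A $ 1 $ 1)"
  define b where "b = cmod (A $ 1 $ 2)"
  define c where "c = cmod (A $ 2 $ 1)"
  define e where "e = cmod (A $ 2 $ 2)"
  define D where "D = cmod (A $ 1 $ 1 * A $ 2 $ 2 - A $ 1 $ 2 * A $ 2 $ 1)"
  have "\<bar>cmod (A $ 1 $ 1 * A $ 2 $ 2) - cmod (A $ 1 $ 2 * A $ 2 $ 1)\<bar> \<le> D"
    unfolding D_def by (rule norm_triangle_ineq3)
  hence D1: "D \<ge> b * c - a * e" unfolding a_def b_def c_def e_def norm_mult by linarith
  have sq: "(a - e) ^ 2 \<ge> 0" by simp
  have "(c + b) ^ 2 \<le> a ^ 2 + c ^ 2 + b ^ 2 + e ^ 2 + 2 * D"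
  proof -
    have "a ^ 2 + c ^ 2 + b ^ 2 + e ^ 2 + 2 * D - (c + b) ^ 2 = (a - e) ^ 2 + 2 * (D - (b * c - a * e))"
      by (simp add: algebra_simps power2_eq_square)
    also have "\<dots> \<ge> 0" using D1 by (intro add_nonneg_nonneg) auto
    finally show ?thesis by simp
  qed
  hence "c + b \<le> sqrt (a ^ 2 + c ^ 2 + b ^ 2 + e ^ 2 + 2 * D)"
    by (rule real_le_rsqrt)
  thus ?thesis unfolding tracenorm2_formula a_def b_def c_def e_def D_def .
qed

lemma tracenorm2_off:
  fixes A :: cmat2
  assumes "A $ 1 $ 1 = 0" "A $ 2 $ 2 = 0"
  shows "tracenorm2 A = cmod (A $ 2 $ 1) + cmod (A $ 1 $ 2)"
proof -
  have "tracenorm2 A = sqrt ((cmod (A $ 2 $ 1) + cmod (A $ 1 $ 2)) ^ 2)"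
    unfolding tracenorm2_formula assms by (simp add: norm_mult power2_eq_square algebra_simps)
  also have "\<dots> = cmod (A $ 2 $ 1) + cmod (A $ 1 $ 2)" by simp
  finally show ?thesis .
qed

theorem corollary4p1:
  fixes p :: nat and x :: "nat \<Rightarrow> cmat2"
  assumes "p \<ge> 1" and "x \<in> Mset p"
  shows "distM p x (Vset p) =
           Max ((\<lambda>i. cmod (x i $ 1 $ 2)) ` {..<p} \<union> (\<lambda>i. cmod (x i $ 2 $ 1)) ` {..<p})
       \<and> distM1 p x (Vset p) = (\<Sum>i<p. cmod (x i $ 2 $ 1) + cmod (x i $ 1 $ 2))"
proof -
  define U where "U = (\<lambda>i. cmod (x i $ 1 $ 2)) ` {..<p} \<union> (\<lambda>i. cmod (x i $ 2 $ 1)) ` {..<p}"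
  define v0 :: "nat \<Rightarrow> cmat2" where "v0 = (\<lambda>i. \<chi> a b. if a = b then x i $ a $ b else 0)"
  have fin: "finite U" unfolding U_def by simp
  have z: "0 \<in> {..<p}" using assms(1) by simp
  have ne: "U \<noteq> {}" unfolding U_def using z by blast
  have pne: "{..<p} \<noteq> {}" using z by blast
  have xz: "x i = 0" if "i \<ge> p" for i using assms(2) that unfolding Mset_def by auto
  have v0V: "v0 \<in> Vset p"
    unfolding Vset_def Mset_def diag2_def v0_def using xz by (auto simp: vec_eq_iff)
  have off: "(x - v) i $ 1 $ 2 = x i $ 1 $ 2" "(x - v) i $ 2 $ 1 = x i $ 2 $ 1"
    if "v \<in> Vset p" "i < p" for v i
    using that unfolding Vset_def diag2_def by auto
  have d0: "(x - v0) i $ 1 $ 1 = 0" "(x - v0) i $ 2 $ 2 = 0" for i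
    unfolding v0_def by auto
  have off0: "(x - v0) i $ 1 $ 2 = x i $ 1 $ 2" "(x - v0) i $ 2 $ 1 = x i $ 2 $ 1" for i
    unfolding v0_def by auto
  have part1: "distM p x (Vset p) = Max U"
    unfolding distM_def
  proof (rule cInf_eq_minimum)
    have "Mnorm p (x - v0) = Max U"
    proof (rule antisym)
      show "Mnorm p (x - v0) \<le> Max U"
        unfolding Mnorm_def
      proof (rule Max.boundedI)
        show "finite ((\<lambda>i. opnorm2 ((x - v0) i)) ` {..<p})" by simp
        show "(\<lambda>i. opnorm2 ((x - v0) i)) ` {..<p} \<noteq> {}" using pne by simp
        fix r assume "r \<in> (\<lambda>i. opnorm2 ((x - v0) i)) ` {..<p}"
        then obtain i where i: "i < p" "r = opnorm2 ((x - v0) i)" by auto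
        have "r = max (cmod (x i $ 1 $ 2)) (cmod (x i $ 2 $ 1))"
          using i opnorm2_off[OF d0] off0 by simp
        moreover have "cmod (x i $ 1 $ 2) \<le> Max U" "cmod (x i $ 2 $ 1) \<le> Max U"
          using fin i unfolding U_def by (auto intro!: Max_ge)
        ultimately show "r \<le> Max U" by simp
      qed
    next
      show "Max U \<le> Mnorm p (x - v0)"
      proof (rule Max.boundedI[OF fin ne])
        fix r assume "r \<in> U"
        then obtain i where i: "i < p" "r = cmod (x i $ 1 $ 2) \<or> r = cmod (x i $ 2 $ 1)"
          unfolding U_def by auto
        have "r \<le> opnorm2 ((x - v0) i)" using i opnorm2_ge[of "(x - v0) i"] off0 by auto
        also have "\<dots> \<le> Mnorm p (x - v0)" unfolding Mnorm_def using i by (auto intro!: Max_ge)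
        finally show "r \<le> Mnorm p (x - v0)" .
      qed
    qed
    thus "Max U \<in> (\<lambda>v. Mnorm p (x - v)) ` Vset p" using v0V by (metis image_eqI)
  next
    fix r assume "r \<in> (\<lambda>v. Mnorm p (x - v)) ` Vset p"
    then obtain v where v: "v \<in> Vset p" "r = Mnorm p (x - v)" by auto
    show "Max U \<le> r"
    proof (rule Max.boundedI[OF fin ne])
      fix s assume "s \<in> U"
      then obtain i where i: "i < p" "s = cmod (x i $ 1 $ 2) \<or> s = cmod (x i $ 2 $ 1)"
        unfolding U_def by auto
      have "s \<le> opnorm2 ((x - v) i)" using i opnorm2_ge[of "(x - v) i"] off[OF v(1) i(1)] by auto
      also have "\<dots> \<le> r" unfolding v(2) Mnorm_def using i by (auto intro!: Max_ge)
      finally show "s \<le> r" .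
    qed
  qed
  have part2: "distM1 p x (Vset p) = (\<Sum>i<p. cmod (x i $ 2 $ 1) + cmod (x i $ 1 $ 2))"
    unfolding distM1_def
  proof (rule cInf_eq_minimum)
    have "Mnorm1 p (x - v0) = (\<Sum>i<p. cmod (x i $ 2 $ 1) + cmod (x i $ 1 $ 2))"
      unfolding Mnorm1_def using tracenorm2_off[OF d0] off0 by simp
    thus "(\<Sum>i<p. cmod (x i $ 2 $ 1) + cmod (x i $ 1 $ 2)) \<in> (\<lambda>v. Mnorm1 p (x - v)) ` Vset p"
      using v0V by (metis image_eqI)
  next
    fix r assume "r \<in> (\<lambda>v. Mnorm1 p (x - v)) ` Vset p"
    then obtain v where v: "v \<in> Vset p" "r = Mnorm1 p (x - v)" by auto
    show "(\<Sum>i<p. cmod (x i $ 2 $ 1) + cmod (x i $ 1 $ 2)) \<le> r"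
      unfolding v(2) Mnorm1_def
    proof (rule sum_mono)
      fix i assume "i \<in> {..<p}"
      thus "cmod (x i $ 2 $ 1) + cmod (x i $ 1 $ 2) \<le> tracenorm2 ((x - v) i)"
        using tracenorm2_ge[of "(x - v) i"] off[OF v(1)] by simp
    qed
  qed
  show ?thesis using part1 part2 unfolding U_def by simp
qed


end
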